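(* Let $R$ be a commutative ring with identity and let $M$ be a torsion-free unitary $R$-module. Then the following are equivalent: (1) $M$ is a Noetherian module; (2) $M$ is a $P$-Noetherian module for all prime ideals $P$ of $R$; (3) $M$ is an $\mathfrak{m}$-Noetherian module for all maximal ideals $\mathfrak{m}$ of $R$.
   Context: For a prime ideal $P$ of $R$ and $S=R\setminus P$, $M$ is $P$-Noetherian if every submodule $L$ of $M$ is $S$-finite, i.e. there exist $s\in S$ and a finitely generated submodule $F$ of $M$ with $Ls\subseteq F\subseteq L$. *)

theory Defs
  imports "HOL-Algebra.Algebra"
begin

definition fg_submodule :: "('a, 'c) ring_scheme \<Rightarrow> ('a, 'b, 'd) module_scheme \<Rightarrow> 'b set \<Rightarrow> bool" where
  "fg_submodule R M F \<longleftrightarrow>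
     (\<exists>A. finite A \<and> A \<subseteq> carrier M \<and>
          F = {finsum M (\<lambda>a. c a \<odot>\<^bsub>M\<^esub> a) A | c. c \<in> A \<rightarrow> carrier R})"

definition noetherian_module :: "('a, 'c) ring_scheme \<Rightarrow> ('a, 'b, 'd) module_scheme \<Rightarrow> bool" where
  "noetherian_module R M \<longleftrightarrow> (\<forall>L. submodule L R M \<longrightarrow> fg_submodule R M L)"

definition S_finite :: "('a, 'c) ring_scheme \<Rightarrow> ('a, 'b, 'd) module_scheme \<Rightarrow> 'a set \<Rightarrow> 'b set \<Rightarrow> bool" where
  "S_finite R M S L \<longleftrightarrow>
     (\<exists>s\<in>S. \<exists>F. fg_submodule R M F \<and> (\<lambda>x. s \<odot>\<^bsub>M\<^esub> x) ` L \<subseteq> F \<and> F \<subseteq> L)"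

definition P_noetherian :: "('a, 'c) ring_scheme \<Rightarrow> ('a, 'b, 'd) module_scheme \<Rightarrow> 'a set \<Rightarrow> bool" where
  "P_noetherian R M P \<longleftrightarrow>
     (\<forall>L. submodule L R M \<longrightarrow> S_finite R M (carrier R - P) L)"

definition torsion_free :: "('a, 'c) ring_scheme \<Rightarrow> ('a, 'b, 'd) module_scheme \<Rightarrow> bool" where
  "torsion_free R M \<longleftrightarrow>
     (\<forall>r\<in>carrier R. \<forall>x\<in>carrier M.
        (\<forall>y\<in>carrier R. r \<otimes>\<^bsub>R\<^esub> y = \<zero>\<^bsub>R\<^esub> \<longrightarrow> y = \<zero>\<^bsub>R\<^esub>) \<and> r \<odot>\<^bsub>M\<^esub> x = \<zero>\<^bsub>M\<^esub>
        \<longrightarrow> x = \<zero>\<^bsub>M\<^esub>)"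

end

theory Submission
  imports Defs
begin

definition lc :: "('a, 'c) ring_scheme \<Rightarrow> ('a, 'b, 'd) module_scheme \<Rightarrow> 'b set \<Rightarrow> 'b set" where
  "lc R M A = {finsum M (\<lambda>a. c a \<odot>\<^bsub>M\<^esub> a) A | c. c \<in> A \<rightarrow> carrier R}"

lemma fg_lc: "fg_submodule R M F \<longleftrightarrow> (\<exists>A. finite A \<and> A \<subseteq> carrier M \<and> F = lc R M A)"
  unfolding fg_submodule_def lc_def by simp

lemma (in cring) exists_maximal_ideal:
  assumes "ideal I R" "carrier R \<noteq> I"
  shows "\<exists>m. maximalideal m R \<and> I \<subseteq> m"
proof -
  define A where "A = {J. ideal J R \<and> I \<subseteq> J \<and> \<one> \<notin> J}"
  have IA: "I \<in> A" using assms ideal.one_imp_carrier unfolding A_def by blast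
  have "\<exists>N\<in>A. \<forall>Y\<in>A. N \<subseteq> Y \<longrightarrow> Y = N"
  proof (rule subset_Zorn_nonempty)
    show "A \<noteq> {}" using IA by blast
    fix C assume C: "C \<noteq> {}" "subset.chain A C"
    have "subset.chain {J. ideal J R} C" using C(2) unfolding pred_on.chain_def A_def by auto
    from chain_Union_is_ideal[OF this] C(1) have "ideal (\<Union>C) R" by simp
    moreover have "I \<subseteq> \<Union>C" using C unfolding pred_on.chain_def A_def by blast
    moreover have "\<one> \<notin> \<Union>C" using C unfolding pred_on.chain_def A_def by auto
    ultimately show "\<Union>C \<in> A" unfolding A_def by simp
  qed
  then obtain m where m: "m \<in> A" "\<And>Y. Y \<in> A \<Longrightarrow> m \<subseteq> Y \<Longrightarrow> Y = m" by blast
  have "maximalideal m R"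
  proof (rule maximalidealI)
    show "ideal m R" using m(1) unfolding A_def by simp
    show "carrier R \<noteq> m" using m(1) unfolding A_def by auto
    fix J assume J: "ideal J R" "m \<subseteq> J" "J \<subseteq> carrier R"
    show "J = m \<or> J = carrier R"
    proof (cases "\<one> \<in> J")
      case True then show ?thesis using ideal.one_imp_carrier[OF J(1)] by simp
    next
      case False
      then have "J \<in> A" using J m(1) unfolding A_def by auto
      then show ?thesis using m(2) J(2) by simp
    qed
  qed
  moreover have "I \<subseteq> m" using m(1) unfolding A_def by simp
  ultimately show ?thesis by blast
qed

context module
begin

lemma lc_memI: "c \<in> A \<rightarrow> carrier R \<Longrightarrow> x = finsum M (\<lambda>a. c a \<odot>\<^bsub>M\<^esub> a) A \<Longrightarrow> x \<in> lc R M A"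
  unfolding lc_def by blast

lemma finsum_in_submodule:
  assumes L: "submodule L R M" and fin: "finite A"
  shows "f \<in> A \<rightarrow> L \<Longrightarrow> finsum M f A \<in> L"
  using fin
proof (induct A)
  case empty
  then show ?case using subgroup.one_closed[OF submodule.axioms(1)[OF L]] by simp
next
  case (insert x F)
  have sub: "L \<subseteq> carrier M" using subgroup.subset[OF submodule.axioms(1)[OF L]] by simp
  have "finsum M f (insert x F) = f x \<oplus>\<^bsub>M\<^esub> finsum M f F"
    using insert sub by (intro finsum_insert) auto
  moreover have "finsum M f F \<in> L" using insert by auto
  moreover have "f x \<in> L" using insert by auto
  ultimately show ?case using subgroup.m_closed[OF submodule.axioms(1)[OF L]] by simp
qed

lemma lc_sub:
  assumes "submodule L R M" "finite A" "A \<subseteq> L"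
  shows "lc R M A \<subseteq> L"
proof
  fix x assume "x \<in> lc R M A"
  then obtain c where c: "c \<in> A \<rightarrow> carrier R" "x = finsum M (\<lambda>a. c a \<odot>\<^bsub>M\<^esub> a) A"
    unfolding lc_def by blast
  show "x \<in> L" unfolding c(2)
    using c(1) assms by (intro finsum_in_submodule) (auto intro: submodule.smult_closed)
qed

lemma lc_carrier:
  assumes "finite A" "A \<subseteq> carrier M"
  shows "lc R M A \<subseteq> carrier M"
  using lc_sub[OF carrier_is_submodule assms] .

lemma lc_mono:
  assumes "finite B" "A \<subseteq> B" "B \<subseteq> carrier M"
  shows "lc R M A \<subseteq> lc R M B"
proof
  fix x assume "x \<in> lc R M A"
  then obtain c where c: "c \<in> A \<rightarrow> carrier R" "x = finsum M (\<lambda>a. c a \<odot>\<^bsub>M\<^esub> a) A"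
    unfolding lc_def by blast
  define d where "d a = (if a \<in> A then c a else \<zero>)" for a
  have d: "d \<in> B \<rightarrow> carrier R" using c(1) unfolding d_def by auto
  have "finsum M (\<lambda>a. c a \<odot>\<^bsub>M\<^esub> a) A = finsum M (\<lambda>a. d a \<odot>\<^bsub>M\<^esub> a) B"
  proof (rule add.finprod_mono_neutral_cong_left)
    show "finite B" "A \<subseteq> B" by fact+
    show "\<And>i. i \<in> B - A \<Longrightarrow> d i \<odot>\<^bsub>M\<^esub> i = \<zero>\<^bsub>M\<^esub>" using assms unfolding d_def by auto
    show "\<And>x. x \<in> A \<Longrightarrow> c x \<odot>\<^bsub>M\<^esub> x = d x \<odot>\<^bsub>M\<^esub> x" unfolding d_def by simp
    show "(\<lambda>a. d a \<odot>\<^bsub>M\<^esub> a) \<in> B \<rightarrow> carrier M" using d assms by auto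
  qed
  then show "x \<in> lc R M B" using c d unfolding lc_def by blast
qed

lemma lc_add:
  assumes "finite A" "A \<subseteq> carrier M" "x \<in> lc R M A" "y \<in> lc R M A"
  shows "x \<oplus>\<^bsub>M\<^esub> y \<in> lc R M A"
proof -
  obtain c where c: "c \<in> A \<rightarrow> carrier R" "x = finsum M (\<lambda>a. c a \<odot>\<^bsub>M\<^esub> a) A"
    using assms unfolding lc_def by blast
  obtain d where d: "d \<in> A \<rightarrow> carrier R" "y = finsum M (\<lambda>a. d a \<odot>\<^bsub>M\<^esub> a) A"
    using assms unfolding lc_def by blast
  have "x \<oplus>\<^bsub>M\<^esub> y = finsum M (\<lambda>a. c a \<odot>\<^bsub>M\<^esub> a \<oplus>\<^bsub>M\<^esub> d a \<odot>\<^bsub>M\<^esub> a) A"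
    using c d assms by (subst finsum_addf) (auto simp: Pi_def)
  also have "\<dots> = finsum M (\<lambda>a. (c a \<oplus> d a) \<odot>\<^bsub>M\<^esub> a) A"
    using c d assms by (intro finsum_cong') (auto simp: subset_iff Pi_def smult_l_distr)
  finally show ?thesis
    by (rule lc_memI[rotated]) (insert c d, auto)
qed

lemma lc_smult:
  assumes "finite A" "A \<subseteq> carrier M" "x \<in> lc R M A" "r \<in> carrier R"
  shows "r \<odot>\<^bsub>M\<^esub> x \<in> lc R M A"
proof -
  obtain c where c: "c \<in> A \<rightarrow> carrier R" "x = finsum M (\<lambda>a. c a \<odot>\<^bsub>M\<^esub> a) A"
    using assms unfolding lc_def by blast
  have "r \<odot>\<^bsub>M\<^esub> x = finsum M (\<lambda>a. r \<odot>\<^bsub>M\<^esub> (c a \<odot>\<^bsub>M\<^esub> a)) A"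
    using c assms by (simp add: finsum_smult_ldistr Pi_def subset_iff)
  also have "\<dots> = finsum M (\<lambda>a. (r \<otimes> c a) \<odot>\<^bsub>M\<^esub> a) A"
    using c assms by (intro finsum_cong') (auto simp: subset_iff Pi_def smult_assoc1)
  finally show ?thesis
    by (rule lc_memI[rotated]) (insert c assms, auto)
qed

lemma lc_zero:
  assumes "finite A" "A \<subseteq> carrier M"
  shows "\<zero>\<^bsub>M\<^esub> \<in> lc R M A"
proof -
  have "finsum M (\<lambda>a. \<zero> \<odot>\<^bsub>M\<^esub> a) A = finsum M (\<lambda>a. \<zero>\<^bsub>M\<^esub>) A"
    using assms by (intro finsum_cong') (auto simp: subset_iff)
  also have "\<dots> = \<zero>\<^bsub>M\<^esub>" by simp
  finally have eq: "\<zero>\<^bsub>M\<^esub> = finsum M (\<lambda>a. \<zero> \<odot>\<^bsub>M\<^esub> a) A" by simp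
  show ?thesis by (rule lc_memI[OF _ eq]) auto
qed

lemma lc_self:
  assumes "finite A" "A \<subseteq> carrier M" "b \<in> A"
  shows "b \<in> lc R M A"
proof -
  define c where "c a = (if b = a then \<one> else \<zero>)" for a
  have "finsum M (\<lambda>a. c a \<odot>\<^bsub>M\<^esub> a) A = finsum M (\<lambda>a. if b = a then a else \<zero>\<^bsub>M\<^esub>) A"
    using assms unfolding c_def by (intro finsum_cong') (auto simp: subset_iff)
  also have "\<dots> = b" using assms by (intro finsum_singleton) auto
  finally have eq: "b = finsum M (\<lambda>a. c a \<odot>\<^bsub>M\<^esub> a) A" by simp
  show ?thesis by (rule lc_memI[OF _ eq]) (auto simp: c_def)
qed

lemma noeth_imp_P:
  assumes N: "noetherian_module R M" and P: "primeideal P R"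
  shows "P_noetherian R M P"
  unfolding P_noetherian_def S_finite_def
proof (intro allI impI)
  fix L assume L: "submodule L R M"
  have Lsub: "L \<subseteq> carrier M" using subgroup.subset[OF submodule.axioms(1)[OF L]] by simp
  have fg: "fg_submodule R M L" using N L unfolding noetherian_module_def by blast
  have "\<one> \<notin> P"
    using P ideal.one_imp_carrier[OF primeideal.axioms(1)[OF P]] primeideal.I_notcarr[OF P] by metis
  then have one: "\<one> \<in> carrier R - P" by simp
  have "(\<lambda>x. \<one> \<odot>\<^bsub>M\<^esub> x) ` L \<subseteq> L" using Lsub by auto
  then show "\<exists>s\<in>carrier R - P. \<exists>F. fg_submodule R M F \<and> (\<lambda>x. s \<odot>\<^bsub>M\<^esub> x) ` L \<subseteq> F \<and> F \<subseteq> L"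
    using one fg by blast
qed

lemma max_imp_noeth:
  assumes H: "\<forall>m. maximalideal m R \<longrightarrow> P_noetherian R M m"
  shows "noetherian_module R M"
  unfolding noetherian_module_def
proof (intro allI impI)
  fix L assume L: "submodule L R M"
  have Lsub: "L \<subseteq> carrier M" using subgroup.subset[OF submodule.axioms(1)[OF L]] by simp
  define T where "T = {s \<in> carrier R. \<exists>A. finite A \<and> A \<subseteq> L \<and> (\<forall>x\<in>L. s \<odot>\<^bsub>M\<^esub> x \<in> lc R M A)}"
  have Tsub: "T \<subseteq> carrier R" unfolding T_def by auto
  have T0: "\<zero> \<in> T"
  proof -
    have "\<forall>x\<in>L. \<zero> \<odot>\<^bsub>M\<^esub> x \<in> lc R M {}" using Lsub lc_zero[of "{}"] by (auto simp: subset_iff)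
    then show ?thesis unfolding T_def by blast
  qed
  have Tadd: "s \<oplus> t \<in> T" if s: "s \<in> T" and t: "t \<in> T" for s t
  proof -
    obtain A where A: "finite A" "A \<subseteq> L" "\<forall>x\<in>L. s \<odot>\<^bsub>M\<^esub> x \<in> lc R M A" "s \<in> carrier R"
      using s unfolding T_def by blast
    obtain B where B: "finite B" "B \<subseteq> L" "\<forall>x\<in>L. t \<odot>\<^bsub>M\<^esub> x \<in> lc R M B" "t \<in> carrier R"
      using t unfolding T_def by blast
    have AB: "finite (A \<union> B)" "A \<union> B \<subseteq> carrier M" using A B Lsub by auto
    have "\<forall>x\<in>L. (s \<oplus> t) \<odot>\<^bsub>M\<^esub> x \<in> lc R M (A \<union> B)"
    proof
      fix x assume x: "x \<in> L"
      then have xc: "x \<in> carrier M" using Lsub by auto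
      have "s \<odot>\<^bsub>M\<^esub> x \<in> lc R M (A \<union> B)" using A(3) x lc_mono[OF AB(1) _ AB(2), of A] by auto
      moreover have "t \<odot>\<^bsub>M\<^esub> x \<in> lc R M (A \<union> B)" using B(3) x lc_mono[OF AB(1) _ AB(2), of B] by auto
      ultimately show "(s \<oplus> t) \<odot>\<^bsub>M\<^esub> x \<in> lc R M (A \<union> B)"
        using lc_add[OF AB] smult_l_distr[OF A(4) B(4) xc] by simp
    qed
    then show ?thesis unfolding T_def using A B by auto
  qed
  have Tmul: "r \<otimes> s \<in> T" if s: "s \<in> T" and r: "r \<in> carrier R" for s r
  proof -
    obtain A where A: "finite A" "A \<subseteq> L" "\<forall>x\<in>L. s \<odot>\<^bsub>M\<^esub> x \<in> lc R M A" "s \<in> carrier R"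
      using s unfolding T_def by blast
    have Ac: "A \<subseteq> carrier M" using A Lsub by auto
    have "\<forall>x\<in>L. (r \<otimes> s) \<odot>\<^bsub>M\<^esub> x \<in> lc R M A"
    proof
      fix x assume x: "x \<in> L"
      then have xc: "x \<in> carrier M" using Lsub by auto
      show "(r \<otimes> s) \<odot>\<^bsub>M\<^esub> x \<in> lc R M A"
        using smult_assoc1[OF r A(4) xc] lc_smult[OF A(1) Ac _ r] A(3) x by simp
    qed
    then show ?thesis unfolding T_def using A r by auto
  qed
  have Tneg: "\<ominus> s \<in> T" if s: "s \<in> T" for s
  proof -
    have sc: "s \<in> carrier R" using s Tsub by auto
    have "\<ominus> s = (\<ominus> \<one>) \<otimes> s" using sc by (simp add: R.l_minus)
    then show ?thesis using Tmul[OF s] by simp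
  qed
  have idT: "ideal T R"
  proof (rule idealI[OF R.ring_axioms])
    show "subgroup T (add_monoid R)"
    proof (rule subgroup.intro)
      show "T \<subseteq> carrier (add_monoid R)" using Tsub by simp
      show "\<And>x y. x \<in> T \<Longrightarrow> y \<in> T \<Longrightarrow> x \<otimes>\<^bsub>add_monoid R\<^esub> y \<in> T" using Tadd by simp
      show "\<one>\<^bsub>add_monoid R\<^esub> \<in> T" using T0 by simp
      show "\<And>x. x \<in> T \<Longrightarrow> inv\<^bsub>add_monoid R\<^esub> x \<in> T" using Tneg by (simp add: a_inv_def[symmetric])
    qed
    show "\<And>a x. a \<in> T \<Longrightarrow> x \<in> carrier R \<Longrightarrow> x \<otimes> a \<in> T" using Tmul by simp
    show "\<And>a x. a \<in> T \<Longrightarrow> x \<in> carrier R \<Longrightarrow> a \<otimes> x \<in> T" using Tmul Tsub R.m_comm by (metis subsetD)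
  qed
  have "T = carrier R"
  proof (rule ccontr)
    assume "T \<noteq> carrier R"
    then obtain m where m: "maximalideal m R" "T \<subseteq> m"
      using cring.exists_maximal_ideal[OF R.is_cring idT] by metis
    have "S_finite R M (carrier R - m) L" using H m(1) L unfolding P_noetherian_def by blast
    then obtain s F where sF: "s \<in> carrier R - m" "fg_submodule R M F"
      "(\<lambda>x. s \<odot>\<^bsub>M\<^esub> x) ` L \<subseteq> F" "F \<subseteq> L"
      unfolding S_finite_def by blast
    then obtain A where A: "finite A" "A \<subseteq> carrier M" "F = lc R M A" unfolding fg_lc by blast
    have "A \<subseteq> L" using lc_self[OF A(1,2)] A(3) sF(4) by blast
    moreover have "\<forall>x\<in>L. s \<odot>\<^bsub>M\<^esub> x \<in> lc R M A" using sF(3) A(3) by blast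
    ultimately have "s \<in> T" unfolding T_def using sF(1) A(1) by blast
    then show False using m(2) sF(1) by blast
  qed
  then have "\<one> \<in> T" by simp
  then obtain A where A: "finite A" "A \<subseteq> L" "\<forall>x\<in>L. \<one> \<odot>\<^bsub>M\<^esub> x \<in> lc R M A"
    unfolding T_def by blast
  have "L \<subseteq> lc R M A" using A(3) Lsub by (metis smult_one subsetD subsetI)
  moreover have "lc R M A \<subseteq> L" using lc_sub[OF L A(1,2)] .
  ultimately have "L = lc R M A" by blast
  then show "fg_submodule R M L" unfolding fg_lc using A Lsub by blast
qed

end

theorem proposition2p3:
  fixes R :: "('a, 'c) ring_scheme" and M :: "('a, 'b, 'd) module_scheme"
  assumes "module R M"
    and "torsion_free R M"
  shows "(noetherian_module R M \<longleftrightarrow> (\<forall>P. primeideal P R \<longrightarrow> P_noetherian R M P))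
       \<and> ((\<forall>P. primeideal P R \<longrightarrow> P_noetherian R M P) \<longleftrightarrow>
          (\<forall>m. maximalideal m R \<longrightarrow> P_noetherian R M m))"
proof -
  interpret module R M by fact
  have a: "noetherian_module R M \<Longrightarrow> (\<forall>P. primeideal P R \<longrightarrow> P_noetherian R M P)"
    using noeth_imp_P by blast
  have b: "(\<forall>P. primeideal P R \<longrightarrow> P_noetherian R M P) \<Longrightarrow> (\<forall>m. maximalideal m R \<longrightarrow> P_noetherian R M m)"
    using R.maximalideal_prime by blast
  have c: "(\<forall>m. maximalideal m R \<longrightarrow> P_noetherian R M m) \<Longrightarrow> noetherian_module R M"
    using max_imp_noeth by blast
  show ?thesis using a b c by blast
qed

end
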